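(* Let $\mathcal{X}=\{1,\dots,n\}$ and $\pi$ a probability mass function on $\mathcal{X}$ with full support and $\pi(1)\le\dots\le\pi(n)$. Fix $k\in\{1,\dots,n\}$, let $\mathcal{O}_i=\{i\}$ for $1\le i\le k-1$ and $\mathcal{O}_k=\{k,\dots,n\}$, and let $G$ be the Gibbs kernel of this partition. For $P\in\mathcal{S}(\pi)$, $D^\pi_{KL}(GPG\|\Pi)=0$ if and only if: (1) $P(x,y)=\pi(y)$ for all $x,y\in\{1,\dots,k-1\}$; (2) $\sum_{w\in\mathcal{O}_k}P(x,w)=\pi(\mathcal{O}_k)$ for all $x\in\{1,\dots,k-1\}$; (3) $\sum_{z\in\mathcal{O}_k}\pi(z)P(z,y)=\pi(\mathcal{O}_k)\pi(y)$ for all $y\in\{1,\dots,k-1\}$; (4) $\sum_{z,w\in\mathcal{O}_k}\pi(z)P(z,w)=\pi(\mathcal{O}_k)^2$. Equivalently, these conditions characterise $GPG=\Pi$.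
   Context: $\mathcal{S}(\pi)$ is the set of transition matrices $P$ with $\pi P=\pi$. $G(x,y)=\pi(y)/\pi(\mathcal{O}(x))$ if $y$ is in the block $\mathcal{O}(x)$ containing $x$, else $0$, with $\pi(A)=\sum_{z\in A}\pi(z)$. $\Pi$ is the matrix with all rows equal to $\pi$, and $D^\pi_{KL}(P\|Q)=\sum_{x,y}\pi(x)P(x,y)\log\frac{P(x,y)}{Q(x,y)}$ with $0\log(0/a)=0$. *)

theory Defs
  imports Complex_Main
begin

text \<open>State space X = {1..n}; kernels are functions nat => nat => real,
  only their values on {1..n} x {1..n} matter.\<close>

definition is_pmf :: "nat \<Rightarrow> (nat \<Rightarrow> real) \<Rightarrow> bool" where
  "is_pmf n \<pi> \<longleftrightarrow> (\<forall>x\<in>{1..n}. \<pi> x \<ge> 0) \<and> (\<Sum>x\<in>{1..n}. \<pi> x) = 1"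

definition is_transition :: "nat \<Rightarrow> (nat \<Rightarrow> nat \<Rightarrow> real) \<Rightarrow> bool" where
  "is_transition n P \<longleftrightarrow> (\<forall>x\<in>{1..n}. \<forall>y\<in>{1..n}. P x y \<ge> 0)
     \<and> (\<forall>x\<in>{1..n}. (\<Sum>y\<in>{1..n}. P x y) = 1)"

definition stat_set :: "nat \<Rightarrow> (nat \<Rightarrow> real) \<Rightarrow> (nat \<Rightarrow> nat \<Rightarrow> real) set" where
  "stat_set n \<pi> = {P. is_transition n P \<and> (\<forall>y\<in>{1..n}. (\<Sum>x\<in>{1..n}. \<pi> x * P x y) = \<pi> y)}"

definition massp :: "(nat \<Rightarrow> real) \<Rightarrow> nat set \<Rightarrow> real" where
  "massp \<pi> A = (\<Sum>z\<in>A. \<pi> z)"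

definition blk :: "nat \<Rightarrow> nat \<Rightarrow> nat \<Rightarrow> nat set" where
  "blk n k x = (if x < k then {x} else {k..n})"

definition gibbs :: "nat \<Rightarrow> nat \<Rightarrow> (nat \<Rightarrow> real) \<Rightarrow> nat \<Rightarrow> nat \<Rightarrow> real" where
  "gibbs n k \<pi> x y = (if y \<in> blk n k x then \<pi> y / massp \<pi> (blk n k x) else 0)"

definition mmul :: "nat \<Rightarrow> (nat \<Rightarrow> nat \<Rightarrow> real) \<Rightarrow> (nat \<Rightarrow> nat \<Rightarrow> real) \<Rightarrow> nat \<Rightarrow> nat \<Rightarrow> real" where
  "mmul n A B x y = (\<Sum>z\<in>{1..n}. A x z * B z y)"

definition Pimat :: "(nat \<Rightarrow> real) \<Rightarrow> nat \<Rightarrow> nat \<Rightarrow> real" where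
  "Pimat \<pi> x y = \<pi> y"

definition KLpi :: "nat \<Rightarrow> (nat \<Rightarrow> real) \<Rightarrow> (nat \<Rightarrow> nat \<Rightarrow> real) \<Rightarrow> (nat \<Rightarrow> nat \<Rightarrow> real) \<Rightarrow> real" where
  "KLpi n \<pi> P Q = (\<Sum>x\<in>{1..n}. \<Sum>y\<in>{1..n}.
      (if P x y = 0 then 0 else \<pi> x * P x y * ln (P x y / Q x y)))"

end

theory Submission
  imports Defs
begin

lemma gibbs_row:
  fixes p q :: "nat \<Rightarrow> real"
  assumes fin: "finite A" and qpos: "\<forall>y\<in>A. q y > 0" and pnn: "\<forall>y\<in>A. p y \<ge> 0"
    and sp: "sum p A = 1" and sq: "sum q A = 1"
  shows "(\<Sum>y\<in>A. if p y = 0 then 0 else p y * ln (p y / q y)) \<ge> 0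
    \<and> ((\<Sum>y\<in>A. if p y = 0 then 0 else p y * ln (p y / q y)) = 0 \<longleftrightarrow> (\<forall>y\<in>A. p y = q y))"
proof -
  define h where "h y = (if p y = 0 then q y else p y * (q y / p y - 1 - ln (q y / p y)))" for y
  have hnn: "h y \<ge> 0" if "y \<in> A" for y
  proof (cases "p y = 0")
    case True thus ?thesis using qpos that by (simp add: h_def less_imp_le)
  next
    case False
    hence "p y > 0" using pnn that by force
    moreover have "q y / p y > 0" using qpos that \<open>p y > 0\<close> by simp
    ultimately show ?thesis using ln_le_minus_one[of "q y / p y"] False by (simp add: h_def)
  qed
  have hz: "h y = 0 \<longleftrightarrow> p y = q y" if "y \<in> A" for y
  proof (cases "p y = 0")
    case True thus ?thesis using qpos that by (auto simp add: h_def)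
  next
    case False
    hence pp: "p y > 0" using pnn that by force
    have qp: "q y / p y > 0" using qpos that pp by simp
    show ?thesis
    proof
      assume "h y = 0"
      hence "ln (q y / p y) = q y / p y - 1" using False by (simp add: h_def)
      hence "q y / p y = 1" using ln_eq_minus_one qp by blast
      thus "p y = q y" using pp by (simp add: field_simps)
    next
      assume "p y = q y" thus "h y = 0" using False by (simp add: h_def)
    qed
  qed
  have tm: "(if p y = 0 then 0 else p y * ln (p y / q y)) = h y - q y + p y" if "y \<in> A" for y
  proof (cases "p y = 0")
    case True thus ?thesis by (simp add: h_def)
  next
    case False
    hence pp: "p y > 0" using pnn that by force
    have "ln (q y / p y) = - ln (p y / q y)" using pp qpos that by (simp add: ln_divide_pos)
    thus ?thesis using False by (simp add: h_def field_simps)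
  qed
  have "(\<Sum>y\<in>A. if p y = 0 then 0 else p y * ln (p y / q y)) = (\<Sum>y\<in>A. h y - q y + p y)"
    using tm by (rule sum.cong[OF refl])
  also have "\<dots> = sum h A" using sp sq by (simp add: sum.distrib sum_subtractf)
  finally have eq: "(\<Sum>y\<in>A. if p y = 0 then 0 else p y * ln (p y / q y)) = sum h A" .
  show ?thesis unfolding eq
    using sum_nonneg[of A h] hnn sum_nonneg_eq_0_iff[OF fin, of h] hz by auto
qed

lemma mmul_stoch:
  assumes "\<forall>x\<in>{1..n}. \<forall>y\<in>{1..n}. A x y \<ge> 0" "\<forall>x\<in>{1..n}. (\<Sum>y\<in>{1..n}. A x y) = 1"
    "\<forall>x\<in>{1..n}. \<forall>y\<in>{1..n}. B x y \<ge> 0" "\<forall>x\<in>{1..n}. (\<Sum>y\<in>{1..n}. B x y) = 1"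
  shows "(\<forall>x\<in>{1..n}. \<forall>y\<in>{1..n}. mmul n A B x y \<ge> 0) \<and> (\<forall>x\<in>{1..n}. (\<Sum>y\<in>{1..n}. mmul n A B x y) = 1)"
proof safe
  fix x y assume "x \<in> {1..n}" "y \<in> {1..n}"
  thus "mmul n A B x y \<ge> 0" using assms unfolding mmul_def by (intro sum_nonneg) auto
next
  fix x assume x: "x \<in> {1..n}"
  have "(\<Sum>y\<in>{1..n}. mmul n A B x y) = (\<Sum>z\<in>{1..n}. A x z * (\<Sum>y\<in>{1..n}. B z y))"
    unfolding mmul_def by (simp add: sum_distrib_left) (rule sum.swap)
  also have "\<dots> = (\<Sum>z\<in>{1..n}. A x z)" using assms(4) by simp
  finally show "(\<Sum>y\<in>{1..n}. mmul n A B x y) = 1" using assms(2) x by simp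
qed

lemma split_sum:
  fixes f :: "nat \<Rightarrow> real"
  assumes "1 \<le> k" "k \<le> n"
  shows "(\<Sum>z\<in>{1..n}. f z) = (\<Sum>z\<in>{1..<k}. f z) + (\<Sum>z\<in>{k..n}. f z)"
proof -
  have "{1..n} = {1..<k} \<union> {k..n}" using assms by auto
  thus ?thesis by (simp add: sum.union_disjoint ivl_disj_int)
qed

theorem proposition7p2:
  fixes n k :: nat and \<pi> :: "nat \<Rightarrow> real" and P :: "nat \<Rightarrow> nat \<Rightarrow> real"
  assumes pmf: "is_pmf n \<pi>"
    and full: "\<forall>x\<in>{1..n}. \<pi> x > 0"
    and sorted: "\<forall>x\<in>{1..n}. \<forall>y\<in>{1..n}. x \<le> y \<longrightarrow> \<pi> x \<le> \<pi> y"
    and k: "k \<in> {1..n}"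
    and P: "P \<in> stat_set n \<pi>"
  defines "G \<equiv> gibbs n k \<pi>"
    and "conds \<equiv>
      (\<forall>x\<in>{1..<k}. \<forall>y\<in>{1..<k}. P x y = \<pi> y)
      \<and> (\<forall>x\<in>{1..<k}. (\<Sum>w\<in>{k..n}. P x w) = massp \<pi> {k..n})
      \<and> (\<forall>y\<in>{1..<k}. (\<Sum>z\<in>{k..n}. \<pi> z * P z y) = massp \<pi> {k..n} * \<pi> y)
      \<and> (\<Sum>z\<in>{k..n}. \<Sum>w\<in>{k..n}. \<pi> z * P z w) = (massp \<pi> {k..n})\<^sup>2"
  shows "(KLpi n \<pi> (mmul n (mmul n G P) G) (Pimat \<pi>) = 0 \<longleftrightarrow> conds)
       \<and> ((\<forall>x\<in>{1..n}. \<forall>y\<in>{1..n}. mmul n (mmul n G P) G x y = Pimat \<pi> x y) \<longleftrightarrow> conds)"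
proof -
  define m where "m = massp \<pi> {k..n}"
  have k1: "1 \<le> k" and kn: "k \<le> n" using k by auto
  have mpos: "m > 0" unfolding m_def massp_def
    using full kn k1 by (intro sum_pos) auto
  have Ptr: "is_transition n P" using P by (simp add: stat_set_def)
  hence Pnn: "\<forall>x\<in>{1..n}. \<forall>y\<in>{1..n}. P x y \<ge> 0" and Prow: "\<forall>x\<in>{1..n}. (\<Sum>y\<in>{1..n}. P x y) = 1"
    by (auto simp: is_transition_def)
  have psum: "(\<Sum>x\<in>{1..n}. \<pi> x) = 1" using pmf by (simp add: is_pmf_def)
  have Gf: "G x z = (if x < k then (if z = x then 1 else 0) else if z \<in> {k..n} then \<pi> z / m else 0)"
    if "x \<in> {1..n}" for x z
    using that full[rule_format, OF that] unfolding G_def gibbs_def blk_def m_def massp_def by auto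
  define GP where "GP = mmul n G P"
  have GPf: "GP x w = (if x < k then P x w else (\<Sum>z\<in>{k..n}. \<pi> z * P z w) / m)"
    if x: "x \<in> {1..n}" for x w
  proof (cases "x < k")
    case True
    have "GP x w = (\<Sum>z\<in>{1..n}. if z = x then P x w else 0)"
      unfolding GP_def mmul_def using Gf[OF x] True by (intro sum.cong) auto
    also have "\<dots> = P x w" using x by simp
    finally show ?thesis using True by simp
  next
    case False
    have "GP x w = (\<Sum>z\<in>{1..n}. if z \<in> {k..n} then \<pi> z * P z w / m else 0)"
      unfolding GP_def mmul_def using Gf[OF x] False by (intro sum.cong) auto
    also have "\<dots> = (\<Sum>z\<in>{1..<k}. if z \<in> {k..n} then \<pi> z * P z w / m else 0)
       + (\<Sum>z\<in>{k..n}. if z \<in> {k..n} then \<pi> z * P z w / m else 0)"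
      by (rule split_sum[OF k1 kn])
    also have "\<dots> = (\<Sum>z\<in>{k..n}. \<pi> z * P z w / m)" by simp
    also have "\<dots> = (\<Sum>z\<in>{k..n}. \<pi> z * P z w) / m" by (simp add: sum_divide_distrib)
    finally show ?thesis using False by simp
  qed
  define M where "M = mmul n GP G"
  have Mf: "M x y = (if y < k then GP x y else (\<Sum>w\<in>{k..n}. GP x w) * \<pi> y / m)"
    if x: "x \<in> {1..n}" and y: "y \<in> {1..n}" for x y
  proof (cases "y < k")
    case True
    have "M x y = (\<Sum>w\<in>{1..n}. if w = y then GP x y else 0)"
      unfolding M_def mmul_def using Gf True by (intro sum.cong) auto
    also have "\<dots> = GP x y" using y by simp
    finally show ?thesis using True by simp
  next
    case False
    have "M x y = (\<Sum>w\<in>{1..n}. if w \<in> {k..n} then GP x w * \<pi> y / m else 0)"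
      unfolding M_def mmul_def using Gf False y by (intro sum.cong) auto
    also have "\<dots> = (\<Sum>w\<in>{1..<k}. if w \<in> {k..n} then GP x w * \<pi> y / m else 0)
       + (\<Sum>w\<in>{k..n}. if w \<in> {k..n} then GP x w * \<pi> y / m else 0)"
      by (rule split_sum[OF k1 kn])
    also have "\<dots> = (\<Sum>w\<in>{k..n}. GP x w * \<pi> y / m)" by simp
    also have "\<dots> = (\<Sum>w\<in>{k..n}. GP x w) * \<pi> y / m"
      by (simp add: sum_divide_distrib sum_distrib_right)
    finally show ?thesis using False by simp
  qed
  have eqM: "mmul n (mmul n G P) G = M" unfolding M_def GP_def ..
  define D where "D = (\<Sum>z\<in>{k..n}. \<Sum>w\<in>{k..n}. \<pi> z * P z w)"
  have GPk: "(\<Sum>w\<in>{k..n}. GP x w) = D / m" if "x \<in> {1..n}" "\<not> x < k" for x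
  proof -
    have "(\<Sum>w\<in>{k..n}. GP x w) = (\<Sum>w\<in>{k..n}. (\<Sum>z\<in>{k..n}. \<pi> z * P z w) / m)"
      using GPf that by (intro sum.cong) auto
    also have "\<dots> = (\<Sum>w\<in>{k..n}. \<Sum>z\<in>{k..n}. \<pi> z * P z w) / m" by (simp add: sum_divide_distrib)
    also have "\<dots> = D / m" unfolding D_def by (subst sum.swap) simp
    finally show ?thesis .
  qed
  have kin: "k \<in> {1..n}" using k .
  have pik: "\<pi> k > 0" using full kin by blast
  have part2: "(\<forall>x\<in>{1..n}. \<forall>y\<in>{1..n}. M x y = \<pi> y) \<longleftrightarrow> conds"
  proof
    assume H: "\<forall>x\<in>{1..n}. \<forall>y\<in>{1..n}. M x y = \<pi> y"
    have c1: "\<forall>x\<in>{1..<k}. \<forall>y\<in>{1..<k}. P x y = \<pi> y"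
    proof (intro ballI)
      fix x y assume "x \<in> {1..<k}" "y \<in> {1..<k}"
      hence x: "x \<in> {1..n}" "x < k" and y: "y \<in> {1..n}" "y < k" using kn by auto
      show "P x y = \<pi> y" using H x y Mf[OF x(1) y(1)] GPf[OF x(1)] by auto
    qed
    have c2: "\<forall>x\<in>{1..<k}. (\<Sum>w\<in>{k..n}. P x w) = m"
    proof (intro ballI)
      fix x assume "x \<in> {1..<k}"
      hence x: "x \<in> {1..n}" "x < k" using kn by auto
      have "(\<Sum>w\<in>{k..n}. P x w) * \<pi> k / m = \<pi> k"
        using H x kin Mf[OF x(1) kin] GPf[OF x(1)] by auto
      thus "(\<Sum>w\<in>{k..n}. P x w) = m" using pik mpos by (simp add: field_simps)
    qed
    have c3: "\<forall>y\<in>{1..<k}. (\<Sum>z\<in>{k..n}. \<pi> z * P z y) = m * \<pi> y"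
    proof (intro ballI)
      fix y assume "y \<in> {1..<k}"
      hence y: "y \<in> {1..n}" "y < k" using kn by auto
      have "(\<Sum>z\<in>{k..n}. \<pi> z * P z y) / m = \<pi> y"
        using H y kin Mf[OF kin y(1)] GPf[OF kin] by auto
      thus "(\<Sum>z\<in>{k..n}. \<pi> z * P z y) = m * \<pi> y" using mpos by (simp add: field_simps)
    qed
    have "D / m * \<pi> k / m = \<pi> k" using H kin Mf[OF kin kin] GPk[OF kin] by auto
    hence c4: "D = m\<^sup>2" using pik mpos by (simp add: field_simps power2_eq_square)
    show conds unfolding conds_def using c1 c2 c3 c4 by (simp add: m_def D_def)
  next
    assume C: conds
    hence c1: "\<forall>x\<in>{1..<k}. \<forall>y\<in>{1..<k}. P x y = \<pi> y"
      and c2: "\<forall>x\<in>{1..<k}. (\<Sum>w\<in>{k..n}. P x w) = m"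
      and c3: "\<forall>y\<in>{1..<k}. (\<Sum>z\<in>{k..n}. \<pi> z * P z y) = m * \<pi> y"
      and c4: "D = m\<^sup>2"
      unfolding conds_def m_def D_def by auto
    show "\<forall>x\<in>{1..n}. \<forall>y\<in>{1..n}. M x y = \<pi> y"
    proof (intro ballI)
      fix x y assume x: "x \<in> {1..n}" and y: "y \<in> {1..n}"
      show "M x y = \<pi> y"
      proof (cases "x < k")
        case xk: True
        show ?thesis
        proof (cases "y < k")
          case True thus ?thesis using xk x y c1 Mf[OF x y] GPf[OF x] by auto
        next
          case False
          have "(\<Sum>w\<in>{k..n}. GP x w) = (\<Sum>w\<in>{k..n}. P x w)"
            using GPf[OF x] xk by simp
          thus ?thesis using False xk x c2 Mf[OF x y] mpos by auto
        qed
      next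
        case xk: False
        show ?thesis
        proof (cases "y < k")
          case True thus ?thesis using xk x y c3 Mf[OF x y] GPf[OF x] mpos by auto
        next
          case False thus ?thesis using xk x y c4 Mf[OF x y] GPk[OF x xk] mpos
            by (simp add: power2_eq_square)
        qed
      qed
    qed
  qed
  have Gnn: "\<forall>x\<in>{1..n}. \<forall>y\<in>{1..n}. G x y \<ge> 0"
    using Gf full mpos by (auto simp: less_imp_le)
  have Grow: "\<forall>x\<in>{1..n}. (\<Sum>y\<in>{1..n}. G x y) = 1"
  proof
    fix x assume x: "x \<in> {1..n}"
    show "(\<Sum>y\<in>{1..n}. G x y) = 1"
    proof (cases "x < k")
      case True
      have "(\<Sum>y\<in>{1..n}. G x y) = (\<Sum>y\<in>{1..n}. if y = x then 1 else 0)"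
        using Gf[OF x] True by (intro sum.cong) auto
      thus ?thesis using x by simp
    next
      case False
      have "(\<Sum>y\<in>{1..n}. G x y) = (\<Sum>y\<in>{1..n}. if y \<in> {k..n} then \<pi> y / m else 0)"
        using Gf[OF x] False by (intro sum.cong) auto
      also have "\<dots> = (\<Sum>y\<in>{1..<k}. if y \<in> {k..n} then \<pi> y / m else 0)
         + (\<Sum>y\<in>{k..n}. if y \<in> {k..n} then \<pi> y / m else 0)"
        by (rule split_sum[OF k1 kn])
      also have "\<dots> = (\<Sum>y\<in>{k..n}. \<pi> y) / m" by (simp add: sum_divide_distrib)
      also have "\<dots> = 1" using mpos unfolding m_def massp_def by simp
      finally show ?thesis .
    qed
  qed
  have GPst: "(\<forall>x\<in>{1..n}. \<forall>y\<in>{1..n}. GP x y \<ge> 0) \<and> (\<forall>x\<in>{1..n}. (\<Sum>y\<in>{1..n}. GP x y) = 1)"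
    unfolding GP_def by (rule mmul_stoch[OF Gnn Grow Pnn Prow])
  have Mst: "(\<forall>x\<in>{1..n}. \<forall>y\<in>{1..n}. M x y \<ge> 0) \<and> (\<forall>x\<in>{1..n}. (\<Sum>y\<in>{1..n}. M x y) = 1)"
    unfolding M_def using GPst by (intro mmul_stoch[OF _ _ Gnn Grow]) auto
  define R where "R x = (\<Sum>y\<in>{1..n}. if M x y = 0 then 0 else M x y * ln (M x y / \<pi> y))" for x
  have Rx: "R x \<ge> 0 \<and> (R x = 0 \<longleftrightarrow> (\<forall>y\<in>{1..n}. M x y = \<pi> y))" if x: "x \<in> {1..n}" for x
    unfolding R_def using Mst x full psum by (intro gibbs_row) auto
  have KL: "KLpi n \<pi> M (Pimat \<pi>) = (\<Sum>x\<in>{1..n}. \<pi> x * R x)"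
    unfolding KLpi_def R_def Pimat_def sum_distrib_left by (intro sum.cong refl) auto
  have "KLpi n \<pi> M (Pimat \<pi>) = 0 \<longleftrightarrow> (\<forall>x\<in>{1..n}. \<pi> x * R x = 0)"
    unfolding KL using Rx full by (intro sum_nonneg_eq_0_iff) (auto simp: less_imp_le)
  also have "\<dots> \<longleftrightarrow> (\<forall>x\<in>{1..n}. \<forall>y\<in>{1..n}. M x y = \<pi> y)"
  proof (intro ball_cong refl)
    fix x assume x: "x \<in> {1..n}"
    have "\<pi> x \<noteq> 0" using full x by (simp add: less_imp_neq[symmetric])
    thus "(\<pi> x * R x = 0) = (\<forall>y\<in>{1..n}. M x y = \<pi> y)" using Rx[OF x] by simp
  qed
  finally have part1: "KLpi n \<pi> M (Pimat \<pi>) = 0 \<longleftrightarrow> conds" using part2 by simp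
  show ?thesis unfolding eqM using part1 part2 by (simp add: Pimat_def)
qed

end
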